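(* Let $(\phi_t)_{t\ge0}$ be a semigroup of holomorphic self-maps of $\mathbb D$ such that each $\phi_t$, $t>0$, is parabolic. If there exists $t_0>0$ such that $\phi_{t_0}$ is of zero hyperbolic step, then $\phi_t$ is of zero hyperbolic step for all $t>0$.
   Context: $\mathbb D$ is the open unit disk and $\rho_{\mathbb D}$ its hyperbolic distance. A semigroup of holomorphic functions is a family $(\phi_t)_{t\ge0}$ of holomorphic self-maps of $\mathbb D$ with $\phi_0=\mathrm{id}_{\mathbb D}$, $\phi_{t+s}=\phi_t\circ\phi_s$ for all $t,s\ge0$, and $\phi_t(z)\to z$ as $t\to0$ uniformly on compact subsets of $\mathbb D$. A holomorphic self-map $\phi$ of $\mathbb D$ is parabolic if it has no fixed point in $\mathbb D$ and its Denjoy–Wolff point $\tau\in\partial\mathbb D$ (the boundary point to which the iterates converge locally uniformly) satisfies $\phi'(\tau)=1$ (angular derivative). $\phi$ is of zero hyperbolic step if for some (equivalently every) $z_0\in\mathbb D$ the orbit $z_n=\phi^{\circ n}(z_0)$ satisfies $\lim_{n\to\infty}\rho_{\mathbb D}(z_n,z_{n+1})=0$. *)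

theory Defs
  imports "HOL-Complex_Analysis.Complex_Analysis"
begin

definition unit_disc :: "complex set" where
  "unit_disc = ball 0 1"

definition hyp_dist :: "complex \<Rightarrow> complex \<Rightarrow> real" where
  "hyp_dist z w = artanh (cmod (z - w) / cmod (1 - cnj w * z))"

definition holo_self_map :: "(complex \<Rightarrow> complex) \<Rightarrow> bool" where
  "holo_self_map f \<longleftrightarrow> f holomorphic_on unit_disc \<and> f ` unit_disc \<subseteq> unit_disc"

definition holo_semigroup :: "(real \<Rightarrow> complex \<Rightarrow> complex) \<Rightarrow> bool" where
  "holo_semigroup phi \<longleftrightarrow>
     (\<forall>t\<ge>0. holo_self_map (phi t)) \<and>
     (\<forall>z\<in>unit_disc. phi 0 z = z) \<and>
     (\<forall>t\<ge>0. \<forall>s\<ge>0. \<forall>z\<in>unit_disc. phi (t + s) z = phi t (phi s z)) \<and>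
     (\<forall>K. compact K \<and> K \<subseteq> unit_disc \<longrightarrow>
        uniform_limit K phi (\<lambda>z. z) (at_right 0))"

definition stolz_angle :: "complex \<Rightarrow> real \<Rightarrow> complex set" where
  "stolz_angle tau M = {z \<in> unit_disc. cmod (tau - z) < M * (1 - cmod z)}"

definition angular_limit :: "(complex \<Rightarrow> complex) \<Rightarrow> complex \<Rightarrow> complex \<Rightarrow> bool" where
  "angular_limit f tau L \<longleftrightarrow>
     (\<forall>M>1. (f \<longlongrightarrow> L) (at tau within stolz_angle tau M))"

definition boundary_DW_point :: "(complex \<Rightarrow> complex) \<Rightarrow> complex \<Rightarrow> bool" where
  "boundary_DW_point f tau \<longleftrightarrow> cmod tau = 1 \<and>
     (\<forall>K. compact K \<and> K \<subseteq> unit_disc \<longrightarrow>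
        uniform_limit K (\<lambda>n. (f ^^ n)) (\<lambda>_. tau) sequentially)"

definition angular_derivative :: "(complex \<Rightarrow> complex) \<Rightarrow> complex \<Rightarrow> complex \<Rightarrow> bool" where
  "angular_derivative f tau c \<longleftrightarrow>
     angular_limit f tau tau \<and> angular_limit (\<lambda>z. (f z - tau) / (z - tau)) tau c"

definition parabolic :: "(complex \<Rightarrow> complex) \<Rightarrow> bool" where
  "parabolic f \<longleftrightarrow> holo_self_map f \<and> (\<forall>z\<in>unit_disc. f z \<noteq> z) \<and>
     (\<exists>tau. boundary_DW_point f tau \<and> angular_derivative f tau 1)"

definition zero_hyp_step :: "(complex \<Rightarrow> complex) \<Rightarrow> bool" where
  "zero_hyp_step f \<longleftrightarrow> (\<exists>z0\<in>unit_disc.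
     (\<lambda>n. hyp_dist ((f ^^ n) z0) ((f ^^ Suc n) z0)) \<longlonglongrightarrow> 0)"

end

theory Submission
  imports Defs
begin


definition pd :: "complex \<Rightarrow> complex \<Rightarrow> real" where
  "pd a b = cmod (a - b) / cmod (1 - cnj b * a)"

lemma norm_sq_eq: "(cmod z)^2 = (Re z)^2 + (Im z)^2"
  by (simp add: cmod_power2)

lemma key_identity:
  "(cmod (1 - cnj b * a))^2 - (cmod (a - b))^2 = (1 - (cmod a)^2) * (1 - (cmod b)^2)"
  unfolding cmod_power2 by (simp add: power2_eq_square algebra_simps)

lemma one_minus_ne0:
  assumes "cmod a < 1" "cmod b < 1"
  shows "1 - cnj b * a \<noteq> 0"
proof
  assume "1 - cnj b * a = 0"
  then have "cnj b * a = 1" by simp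
  then have "cmod b * cmod a = 1" by (metis complex_mod_cnj norm_mult norm_one)
  moreover have "cmod b * cmod a < 1" using assms
    by (metis mult_strict_mono' norm_ge_zero mult_1_right)
  ultimately show False by simp
qed

lemma pd_ident:
  assumes "cmod a < 1" "cmod b < 1"
  shows "1 - (pd a b)^2 = (1 - (cmod a)^2) * (1 - (cmod b)^2) / (cmod (1 - cnj b * a))^2"
proof -
  have ne: "cmod (1 - cnj b * a) \<noteq> 0" using one_minus_ne0[OF assms] by simp
  show ?thesis using key_identity[of b a] ne
    by (simp add: pd_def power_divide field_simps)
qed

lemma pd_nonneg: "pd a b \<ge> 0" by (simp add: pd_def)

lemma pd_lt1:
  assumes "cmod a < 1" "cmod b < 1"
  shows "pd a b < 1"
proof -
  have "(cmod a)^2 < 1" "(cmod b)^2 < 1" using assms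
    by (simp_all add: power_less_one_iff abs_square_less_1)
  moreover have "(cmod (1 - cnj b * a))^2 > 0" using one_minus_ne0[OF assms] by simp
  ultimately have "1 - (pd a b)^2 > 0" using pd_ident[OF assms] by simp
  then have "(pd a b)^2 < 1" by simp
  then show ?thesis using pd_nonneg by (simp add: abs_square_less_1)
qed

lemma pd_sym: "pd a b = pd b a"
proof -
  have "cmod (1 - cnj b * a) = cmod (1 - cnj a * b)"
    by (metis complex_cnj_cnj complex_cnj_diff complex_cnj_mult complex_cnj_one complex_mod_cnj mult.commute)
  then show ?thesis by (simp add: pd_def norm_minus_commute)
qed

lemma pd_self [simp]: "pd a a = 0" by (simp add: pd_def)



lemma schwarz_pick:
  assumes f: "holo_self_map f" and a: "a \<in> unit_disc" and b: "b \<in> unit_disc"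
  shows "pd (f a) (f b) \<le> pd a b"
proof -
  have hf: "f holomorphic_on ball 0 1" and mf: "f ` ball 0 1 \<subseteq> ball 0 1"
    using f by (auto simp: holo_self_map_def unit_disc_def)
  have mfn: "cmod (f z) < 1" if "cmod z < 1" for z using mf that by (metis image_subset_iff mem_ball_0)
  have na: "cmod a < 1" and nb: "cmod b < 1" using a b by (auto simp: unit_disc_def)
  have nfa: "cmod (f a) < 1" using mf na by (metis image_subset_iff mem_ball_0)
  define g where "g = Moebius_function 0 (f a) \<circ> f \<circ> Moebius_function 0 (-a)"
  have m1: "Moebius_function 0 (-a) ` ball 0 1 \<subseteq> ball 0 1"
    using Moebius_function_norm_lt_1 na by auto
  have hg: "g holomorphic_on ball 0 1"
  proof -
    have "Moebius_function 0 (f a) \<circ> f holomorphic_on ball 0 1"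
      using holomorphic_on_compose_gen[OF hf Moebius_function_holomorphic[OF nfa] mf] .
    then show ?thesis unfolding g_def
      using holomorphic_on_compose_gen[OF Moebius_function_holomorphic[of "-a"] _ m1] na by simp
  qed
  have g0: "g 0 = 0"
    by (simp add: g_def Moebius_function_def)
  have gno: "cmod (g z) < 1" if "cmod z < 1" for z
  proof -
    have "cmod (Moebius_function 0 (-a) z) < 1" using Moebius_function_norm_lt_1 na that by simp
    then have "cmod (f (Moebius_function 0 (-a) z)) < 1" using mfn by auto
    then show ?thesis unfolding g_def using Moebius_function_norm_lt_1 nfa by simp
  qed
  define xi where "xi = Moebius_function 0 a b"
  have nxi: "cmod xi < 1" unfolding xi_def using Moebius_function_norm_lt_1 na nb by simp
  have "cmod (g xi) \<le> cmod xi" using Schwarz_Lemma(1)[OF hg g0 gno nxi] by simp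
  moreover have "Moebius_function 0 (-a) xi = b"
    unfolding xi_def using Moebius_function_compose[of "-a" a b] na nb by simp
  ultimately have "cmod (Moebius_function 0 (f a) (f b)) \<le> cmod (Moebius_function 0 a b)"
    unfolding g_def xi_def by simp
  then have "pd (f b) (f a) \<le> pd b a"
    by (simp add: Moebius_function_def pd_def norm_divide)
  then show ?thesis by (simp add: pd_sym)
qed



definition cay :: "complex \<Rightarrow> complex \<Rightarrow> complex" where
  "cay \<tau> z = \<i> * (\<tau> + z) / (\<tau> - z)"

definition cayi :: "complex \<Rightarrow> complex \<Rightarrow> complex" where
  "cayi \<tau> X = \<tau> * (X - \<i>) / (X + \<i>)"

lemma ne_tau: assumes "cmod \<tau> = 1" "cmod z < 1" shows "\<tau> - z \<noteq> 0"
  using assms by auto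

lemma cnj_tau: assumes "cmod \<tau> = 1" shows "cnj \<tau> * \<tau> = 1"
  using assms by (metis complex_norm_square mult.commute norm_one power_one of_real_1 complex_mult_cnj)

lemma Im_cay:
  assumes t: "cmod \<tau> = 1" and z: "cmod z < 1"
  shows "Im (cay \<tau> z) = (1 - (cmod z)^2) / (cmod (\<tau> - z))^2"
proof -
  have ne: "\<tau> - z \<noteq> 0" using ne_tau[OF t z] .
  have tt: "(Re \<tau>)^2 + (Im \<tau>)^2 = 1" using t by (metis cmod_power2 power_one)
  have e: "of_real ((cmod (\<tau> - z))^2) = (\<tau> - z) * cnj (\<tau> - z)" by (rule complex_norm_square)
  have cn: "cnj (\<tau> - z) \<noteq> 0" using ne by simp
  have "cay \<tau> z = \<i> * ((\<tau> + z) * cnj (\<tau> - z)) / ((\<tau> - z) * cnj (\<tau> - z))"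
    using cn by (simp add: cay_def)
  then have "cay \<tau> z = \<i> * ((\<tau> + z) * cnj (\<tau> - z)) / ((cmod (\<tau> - z))^2)"
    by (simp only: e)
  then have "Im (cay \<tau> z) = Re ((\<tau> + z) * cnj (\<tau> - z)) / ((cmod (\<tau> - z))^2)"
    by (simp add: Im_divide_of_real[symmetric] del: Im_divide_of_real)
  also have "Re ((\<tau> + z) * cnj (\<tau> - z)) = 1 - (cmod z)^2"
    using tt unfolding cmod_power2 by (simp add: power2_eq_square algebra_simps)
  finally show ?thesis .
qed

lemma Im_cay_pos:
  assumes t: "cmod \<tau> = 1" and z: "cmod z < 1"
  shows "Im (cay \<tau> z) > 0"
proof -
  have "(cmod z)^2 < 1" using z by (simp add: abs_square_less_1)
  moreover have "cmod (\<tau> - z) > 0" using ne_tau[OF t z] by simp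
  ultimately show ?thesis using Im_cay[OF t z] by simp
qed

lemma cay_diff:
  assumes t: "cmod \<tau> = 1" and x: "cmod x < 1" and y: "cmod y < 1"
  shows "cay \<tau> x - cay \<tau> y = 2 * \<i> * \<tau> * (x - y) / ((\<tau> - x) * (\<tau> - y))"
  using ne_tau[OF t x] ne_tau[OF t y]
  by (simp add: cay_def field_simps)

lemma cay_diff_cnj:
  assumes t: "cmod \<tau> = 1" and x: "cmod x < 1" and y: "cmod y < 1"
  shows "cay \<tau> x - cnj (cay \<tau> y) = 2 * \<i> * (1 - x * cnj y) / ((\<tau> - x) * (cnj \<tau> - cnj y))"
proof -
  have n1: "\<tau> - x \<noteq> 0" using ne_tau[OF t x] .
  have n2: "cnj \<tau> - cnj y \<noteq> 0" using ne_tau[OF t y]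
    by (metis complex_cnj_diff complex_cnj_zero_iff)
  have ct: "cnj \<tau> * \<tau> = 1" using cnj_tau[OF t] .
  have "cnj (cay \<tau> y) = - \<i> * (cnj \<tau> + cnj y) / (cnj \<tau> - cnj y)"
    by (simp add: cay_def)
  then have "cay \<tau> x - cnj (cay \<tau> y) = \<i> * ((\<tau> + x) * (cnj \<tau> - cnj y) + (cnj \<tau> + cnj y) * (\<tau> - x)) / ((\<tau> - x) * (cnj \<tau> - cnj y))"
    using n1 n2 by (simp add: cay_def field_simps)
  also have "(\<tau> + x) * (cnj \<tau> - cnj y) + (cnj \<tau> + cnj y) * (\<tau> - x) = 2 * (1 - x * cnj y)"
    using ct by (simp add: algebra_simps)
  finally show ?thesis by simp
qed

lemma pd_cay:
  assumes t: "cmod \<tau> = 1" and x: "cmod x < 1" and y: "cmod y < 1"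
  shows "pd x y = cmod (cay \<tau> x - cay \<tau> y) / cmod (cay \<tau> x - cnj (cay \<tau> y))"
proof -
  have n1: "cmod (\<tau> - x) \<noteq> 0" using ne_tau[OF t x] by simp
  have n2: "cmod (\<tau> - y) \<noteq> 0" using ne_tau[OF t y] by simp
  have c2: "cmod (cnj \<tau> - cnj y) = cmod (\<tau> - y)"
    by (metis complex_cnj_diff complex_mod_cnj)
  have c3: "cmod (1 - x * cnj y) = cmod (1 - cnj y * x)" by (simp add: mult.commute)
  show ?thesis
    unfolding cay_diff[OF assms] cay_diff_cnj[OF assms] pd_def
    using n1 n2 t by (simp add: norm_mult norm_divide c2 c3)
qed

lemma cayi_in:
  assumes "Im X > 0" and t: "cmod \<tau> = 1"
  shows "cmod (cayi \<tau> X) < 1"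
proof -
  have "(cmod (X - \<i>))^2 < (cmod (X + \<i>))^2"
    using assms(1) unfolding cmod_power2 by (simp add: power2_eq_square algebra_simps)
  then have lt: "cmod (X - \<i>) < cmod (X + \<i>)"
    by (simp add: power_less_imp_less_base)
  have "X + \<i> \<noteq> 0" using assms(1) by (metis add_cancel_right_left complex.sel(2) complex_i_not_zero neg_equal_iff_equal one_neq_neg_one
        add.inverse_unique Im_complex_of_real Complex_eq_i less_irrefl add_eq_0_iff2 imaginary_unit.sel(2) neg_less_0_iff_less order_less_asym zero_less_one
        minus_complex.sel(2) uminus_complex.sel(2))
  then show ?thesis using lt t by (simp add: cayi_def norm_mult norm_divide divide_less_eq)
qed

lemma cay_cayi:
  assumes "Im X > 0" and t: "cmod \<tau> = 1"
  shows "cay \<tau> (cayi \<tau> X) = X"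
proof -
  have ni: "X + \<i> \<noteq> 0" using assms(1)
    by (metis add.commute add_cancel_right_left add_uminus_conv_diff complex_i_not_zero
       diff_add_cancel imaginary_unit.sel(2) less_numeral_extra(4) minus_complex.sel(2) neg_0_less_iff_less
       not_one_less_zero plus_complex.sel(2) uminus_complex.sel(2) zero_complex.sel(2))
  have nt: "\<tau> \<noteq> 0" using t by auto
  have d: "\<i> * X - 1 \<noteq> 0"
  proof
    assume "\<i> * X - 1 = 0"
    have "X + \<i> = (\<i> * X - 1) * (-\<i>)" by (simp add: algebra_simps)
    then show False using ni \<open>\<i> * X - 1 = 0\<close> by simp
  qed
  have "cay \<tau> (cayi \<tau> X) = (\<i> * (X * (X * (\<tau> * 2))) - X * (\<tau> * 2)) / (\<i> * (X * (\<tau> * 2)) - \<tau> * 2)"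
    using ni nt by (simp add: cay_def cayi_def field_simps)
  also have "\<dots> = X * ((\<i> * X - 1) * (2 * \<tau>)) / ((\<i> * X - 1) * (2 * \<tau>))"
    by (simp add: algebra_simps)
  also have "\<dots> = X" using d nt by simp
  finally show ?thesis .
qed

lemma cayi_holo: "cayi \<tau> holomorphic_on {X. Im X > 0}"
  unfolding cayi_def
proof (intro holomorphic_intros)
  fix X assume "X \<in> {X. Im X > 0}"
  then show "X + \<i> \<noteq> 0" by (auto simp: complex_eq_iff)
qed



lemma pd_cayi:
  assumes t: "cmod \<tau> = 1" and X: "Im X > 0" and Y: "Im Y > 0"
  shows "pd (cayi \<tau> X) (cayi \<tau> Y) = cmod (X - Y) / cmod (X - cnj Y)"
  using pd_cay[OF t cayi_in[OF X t] cayi_in[OF Y t]] cay_cayi[OF X t] cay_cayi[OF Y t] by simp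

lemma halfplane_est:
  assumes t: "cmod \<tau> = 1" and hg: "g holomorphic_on unit_disc"
    and gpos: "\<And>x. x \<in> unit_disc \<Longrightarrow> Im (g x) \<ge> 0"
    and p: "p \<in> unit_disc" and q: "q \<in> unit_disc" and c: "pd p q \<le> c" "c < 1"
  shows "cmod (g q - g p) \<le> 2 * c / (1 - c) * Im (g p)"
proof -
  have c0: "c \<ge> 0" using c pd_nonneg[of p q] by linarith
  have main: "(1 - c) * cmod (g q - g p) \<le> 2 * c * Im (g p) + e" if e: "e > 0" for e
  proof -
    define eps where "eps = e / 2"
    have eps: "eps > 0" using e by (simp add: eps_def)
    define h where "h = (\<lambda>x. cayi \<tau> (g x + \<i> * of_real eps))"
    have imp: "Im (g x + \<i> * of_real eps) > 0" if "x \<in> unit_disc" for x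
      using gpos[OF that] eps by simp
    have hh: "h holomorphic_on unit_disc"
    proof -
      have "(\<lambda>x. g x + \<i> * of_real eps) holomorphic_on unit_disc"
        using hg by (intro holomorphic_intros)
      moreover have "(\<lambda>x. g x + \<i> * of_real eps) ` unit_disc \<subseteq> {X. Im X > 0}" using imp by auto
      ultimately have "cayi \<tau> \<circ> (\<lambda>x. g x + \<i> * of_real eps) holomorphic_on unit_disc"
        using holomorphic_on_compose_gen cayi_holo by blast
      then show ?thesis by (simp add: h_def o_def)
    qed
    have hm: "h ` unit_disc \<subseteq> unit_disc"
      using cayi_in[OF imp t] by (auto simp: h_def unit_disc_def)
    have sm: "holo_self_map h" using hh hm by (simp add: holo_self_map_def)
    have "pd (h q) (h p) \<le> pd q p" using schwarz_pick[OF sm q p] .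
    also have "\<dots> \<le> c" using c by (simp add: pd_sym)
    finally have "pd (h q) (h p) \<le> c" .
    then have le: "cmod (g q - g p) / cmod (g q + \<i> * eps - cnj (g p + \<i> * eps)) \<le> c"
      unfolding h_def pd_cayi[OF t imp[OF q] imp[OF p]] by simp
    have "Im (g q + \<i> * eps - cnj (g p + \<i> * eps)) > 0" using gpos[OF p] gpos[OF q] eps by simp
    then have pos: "cmod (g q + \<i> * eps - cnj (g p + \<i> * eps)) > 0" by (metis norm_zero zero_complex.sel(2) less_irrefl zero_less_norm_iff)
    have "cmod (g q - g p) \<le> c * cmod (g q + \<i> * eps - cnj (g p + \<i> * eps))"
      using le pos by (simp add: divide_le_eq)
    also have "g q + \<i> * eps - cnj (g p + \<i> * eps) = (g q - g p) + \<i> * of_real (2 * (Im (g p) + eps))"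
      by (simp add: complex_eq_iff)
    also have "cmod \<dots> \<le> cmod (g q - g p) + 2 * (Im (g p) + eps)"
    proof -
      have "cmod (\<i> * complex_of_real (2 * (Im (g p) + eps))) = 2 * (Im (g p) + eps)"
        using gpos[OF p] eps by (simp only: norm_mult norm_ii norm_of_real) simp
      then show ?thesis using norm_triangle_ineq[of "g q - g p" "\<i> * of_real (2 * (Im (g p) + eps))"]
        by linarith
    qed
    finally have "cmod (g q - g p) \<le> c * (cmod (g q - g p) + 2 * (Im (g p) + eps))"
      using c0 by (simp add: mult_left_mono)
    then have "(1 - c) * cmod (g q - g p) \<le> 2 * c * Im (g p) + 2 * c * eps"
      by (simp add: algebra_simps)
    also have "2 * c * eps \<le> e" using c c0 eps by (simp add: eps_def mult_left_le_one_le)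
    finally show ?thesis by simp
  qed
  have "(1 - c) * cmod (g q - g p) \<le> 2 * c * Im (g p)"
    using main by (rule field_le_epsilon)
  then show ?thesis using c by (simp add: field_simps)
qed



lemma ray_to_tau:
  assumes t: "cmod \<tau> = 1"
  shows "filterlim (\<lambda>r::real. of_real r * \<tau>) (at \<tau> within stolz_angle \<tau> 2) (at_left 1)"
proof (rule filterlim_at_withinI)
  have "((\<lambda>r::real. of_real r * \<tau>) \<longlongrightarrow> of_real 1 * \<tau>) (at_left 1)"
    by (intro tendsto_intros)
  then show "((\<lambda>r::real. of_real r * \<tau>) \<longlongrightarrow> \<tau>) (at_left 1)" by simp
  have "eventually (\<lambda>r::real. r \<in> {0<..<1}) (at_left 1)" by (rule eventually_at_left_real) simp
  then show "eventually (\<lambda>r. of_real r * \<tau> \<in> stolz_angle \<tau> 2 - {\<tau>}) (at_left (1::real))"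
  proof (rule eventually_mono)
    fix r :: real assume r: "r \<in> {0<..<1}"
    have n: "cmod (of_real r * \<tau>) = r" using r t by (simp add: norm_mult)
    have d: "cmod (\<tau> - of_real r * \<tau>) = 1 - r"
    proof -
      have "\<tau> - of_real r * \<tau> = of_real (1 - r) * \<tau>" by (simp add: algebra_simps)
      then have "cmod (\<tau> - of_real r * \<tau>) = \<bar>1 - r\<bar> * cmod \<tau>" by (simp only: norm_mult norm_of_real)
      then show ?thesis using r t by simp
    qed
    have "of_real r * \<tau> \<noteq> \<tau>" using n r t by auto
    then show "of_real r * \<tau> \<in> stolz_angle \<tau> 2 - {\<tau>}"
      using r n d by (auto simp: stolz_angle_def unit_disc_def)
  qed
qed

lemma one_minus_cnj_tau:
  assumes t: "cmod \<tau> = 1"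
  shows "cmod (1 - cnj \<tau> * w) = cmod (\<tau> - w)"
proof -
  have "1 - cnj \<tau> * w = cnj \<tau> * (\<tau> - w)" using cnj_tau[OF t] by (simp add: algebra_simps)
  then show ?thesis using t by (simp add: norm_mult)
qed

lemma julia:
  assumes f: "holo_self_map f" and t: "cmod \<tau> = 1" and ad: "angular_derivative f \<tau> 1"
    and z: "z \<in> unit_disc"
  shows "Im (cay \<tau> z) \<le> Im (cay \<tau> (f z))"
proof -
  have mf: "f x \<in> unit_disc" if "x \<in> unit_disc" for x using f that by (auto simp: holo_self_map_def)
  have nz: "cmod z < 1" using z by (simp add: unit_disc_def)
  have nfz: "cmod (f z) < 1" using mf[OF z] by (simp add: unit_disc_def)
  let ?b = "\<lambda>r::real. of_real r * \<tau>"
  have lim_b: "filterlim ?b (at \<tau> within stolz_angle \<tau> 2) (at_left 1)" using ray_to_tau[OF t] .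
  have l1: "(f \<longlongrightarrow> \<tau>) (at \<tau> within stolz_angle \<tau> 2)"
    using ad by (simp add: angular_derivative_def angular_limit_def)
  have l2: "((\<lambda>w. (f w - \<tau>) / (w - \<tau>)) \<longlongrightarrow> 1) (at \<tau> within stolz_angle \<tau> 2)"
    using ad by (simp add: angular_derivative_def angular_limit_def)
  have fb: "((\<lambda>r. f (?b r)) \<longlongrightarrow> \<tau>) (at_left 1)" using tendsto_compose_filtermap l1 lim_b
    by (metis filterlim_compose)
  have qb: "((\<lambda>r. (f (?b r) - \<tau>) / (?b r - \<tau>)) \<longlongrightarrow> 1) (at_left 1)"
    using filterlim_compose[OF l2 lim_b] by simp
  define A where "A = (\<lambda>r. (1 - (cmod (f z))^2) / (cmod (1 - cnj (f (?b r)) * f z))^2)"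
  define Q where "Q = (\<lambda>r::real. 2 / (1 + r) * cmod ((f (?b r) - \<tau>) / (?b r - \<tau>)))"
  define B where "B = (\<lambda>r::real. (1 - (cmod z)^2) / (cmod (1 - cnj (?b r) * z))^2)"
  have ne1: "1 - cnj \<tau> * f z \<noteq> 0" using one_minus_cnj_tau[OF t, of "f z"] ne_tau[OF t nfz] by auto
  have ne2: "1 - cnj \<tau> * z \<noteq> 0" using one_minus_cnj_tau[OF t, of z] ne_tau[OF t nz] by auto
  have LA: "(A \<longlongrightarrow> (1 - (cmod (f z))^2) / (cmod (1 - cnj \<tau> * f z))^2) (at_left 1)"
    unfolding A_def using ne1 by (intro tendsto_intros fb) auto
  have LQ: "(Q \<longlongrightarrow> 2 / (1 + 1) * cmod (1::complex)) (at_left 1)"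
    unfolding Q_def by (intro tendsto_intros qb) auto
  have LB: "(B \<longlongrightarrow> (1 - (cmod z)^2) / (cmod (1 - cnj (of_real 1 * \<tau>) * z))^2) (at_left 1)"
    unfolding B_def using ne2 by (intro tendsto_intros) auto
  have key: "B r \<le> A r * Q r" if r: "r \<in> {0<..<1}" for r
  proof -
    have nb: "cmod (?b r) = r" using r t by (simp add: norm_mult)
    have bD: "?b r \<in> unit_disc" using nb r by (simp add: unit_disc_def)
    have nfb: "cmod (f (?b r)) < 1" using mf[OF bD] by (simp add: unit_disc_def)
    have nbl: "cmod (?b r) < 1" using nb r by simp
    have sp: "pd (f z) (f (?b r)) \<le> pd z (?b r)" using schwarz_pick[OF f z bD] .
    then have "(pd (f z) (f (?b r)))^2 \<le> (pd z (?b r))^2" using pd_nonneg by (simp add: power_mono)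
    then have "1 - (pd z (?b r))^2 \<le> 1 - (pd (f z) (f (?b r)))^2" by simp
    then have i1: "(1 - (cmod z)^2) * (1 - r^2) / (cmod (1 - cnj (?b r) * z))^2
         \<le> (1 - (cmod (f z))^2) * (1 - (cmod (f (?b r)))^2) / (cmod (1 - cnj (f (?b r)) * f z))^2"
      unfolding pd_ident[OF nz nbl] pd_ident[OF nfz nfb] using nb by simp
    have r2: "1 - r^2 > 0" using r by (simp add: power_less_one_iff abs_square_less_1)
    have "B r * (1 - r^2) \<le> A r * (1 - (cmod (f (?b r)))^2)"
      using i1 by (simp add: A_def B_def field_simps)
    also have "(1 - (cmod (f (?b r)))^2) \<le> Q r * (1 - r^2)"
    proof -
      have "1 - (cmod (f (?b r)))^2 = (1 - cmod (f (?b r))) * (1 + cmod (f (?b r)))"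
        by (simp add: power2_eq_square algebra_simps)
      also have "\<dots> \<le> 2 * (1 - cmod (f (?b r)))" using nfb by (subst mult.commute, intro mult_right_mono) auto
      also have "1 - cmod (f (?b r)) \<le> cmod (f (?b r) - \<tau>)"
        using norm_triangle_ineq2[of \<tau> "f (?b r)"] t by (simp add: norm_minus_commute)
      also have "cmod (?b r - \<tau>) = 1 - r"
      proof -
        have "?b r - \<tau> = of_real (r - 1) * \<tau>" by (simp add: algebra_simps)
        then have "cmod (?b r - \<tau>) = \<bar>r - 1\<bar> * cmod \<tau>" by (simp only: norm_mult norm_of_real)
        then show ?thesis using r t by simp
      qed
      then have "Q r = 2 / (1 + r) * (cmod (f (?b r) - \<tau>) / (1 - r))"
        unfolding Q_def by (simp only: norm_divide)
      then have "Q r = 2 * cmod (f (?b r) - \<tau>) / (1 - r^2)"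
        using r by (simp add: power2_eq_square field_simps)
      then have "Q r * (1 - r^2) = 2 * cmod (f (?b r) - \<tau>)" using r2 by simp
      then have "cmod (f (?b r) - \<tau>) = Q r * (1 - r^2) / 2" by simp
      finally show ?thesis by simp
    qed
    then have "A r * (1 - (cmod (f (?b r)))^2) \<le> A r * (Q r * (1 - r^2))"
    proof (rule mult_left_mono)
      have "(cmod (f z))^2 \<le> 1" using nfz by (simp add: abs_square_le_1)
      then show "0 \<le> A r" unfolding A_def by simp
    qed
    finally have "B r * (1 - r^2) \<le> (A r * Q r) * (1 - r^2)" by (simp add: mult.assoc)
    then show "B r \<le> A r * Q r" using r2 by simp
  qed
  have ev: "eventually (\<lambda>r. B r \<le> A r * Q r) (at_left (1::real))"
    using eventually_at_left_real[of 0 "1::real"] by (rule eventually_mono) (use key in auto)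
  have "(1 - (cmod z)^2) / (cmod (1 - cnj (of_real 1 * \<tau>) * z))^2
        \<le> (1 - (cmod (f z))^2) / (cmod (1 - cnj \<tau> * f z))^2 * (2 / (1 + 1) * cmod (1::complex))"
    by (rule tendsto_le[OF trivial_limit_at_left_real tendsto_mult[OF LA LQ] LB ev])
  then have "(1 - (cmod z)^2) / (cmod (\<tau> - z))^2 \<le> (1 - (cmod (f z))^2) / (cmod (\<tau> - f z))^2"
    using one_minus_cnj_tau[OF t] by simp
  then show ?thesis using Im_cay[OF t nz] Im_cay[OF t nfz] by simp
qed



lemma sg_self: "holo_semigroup phi \<Longrightarrow> t \<ge> 0 \<Longrightarrow> holo_self_map (phi t)"
  by (simp add: holo_semigroup_def)

lemma sg_in: "holo_semigroup phi \<Longrightarrow> t \<ge> 0 \<Longrightarrow> z \<in> unit_disc \<Longrightarrow> phi t z \<in> unit_disc"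
  by (auto simp: holo_semigroup_def holo_self_map_def)

lemma sg_zero: "holo_semigroup phi \<Longrightarrow> z \<in> unit_disc \<Longrightarrow> phi 0 z = z"
  by (simp add: holo_semigroup_def)

lemma sg_add: "holo_semigroup phi \<Longrightarrow> t \<ge> 0 \<Longrightarrow> s \<ge> 0 \<Longrightarrow> z \<in> unit_disc \<Longrightarrow> phi (t + s) z = phi t (phi s z)"
  by (simp add: holo_semigroup_def)

lemma sg_iter:
  assumes "holo_semigroup phi" "t \<ge> 0" "z \<in> unit_disc"
  shows "(phi t ^^ n) z = phi (real n * t) z"
proof (induction n)
  case 0 then show ?case using sg_zero[OF assms(1,3)] by simp
next
  case (Suc n)
  have "(phi t ^^ Suc n) z = phi t (phi (real n * t) z)" using Suc by simp
  also have "\<dots> = phi (t + real n * t) z" using sg_add[OF assms(1,2) _ assms(3), of "real n * t"] assms(2) by simp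
  finally show ?case by (simp add: algebra_simps)
qed

lemma sg_cont0:
  assumes "holo_semigroup phi" "z \<in> unit_disc"
  shows "((\<lambda>s. phi s z) \<longlongrightarrow> z) (at_right 0)"
proof -
  have "compact {z} \<and> {z} \<subseteq> unit_disc" using assms(2) by simp
  then have "uniform_limit {z} phi (\<lambda>z. z) (at_right 0)"
    using assms(1) unfolding holo_semigroup_def by blast
  from tendsto_uniform_limitI[OF this, of z] show ?thesis by simp
qed

lemma pd_tendsto0:
  assumes "cmod z < 1" and "(g \<longlongrightarrow> z) F"
  shows "((\<lambda>s. pd z (g s)) \<longlongrightarrow> 0) F"
proof -
  have ne: "1 - cnj z * z \<noteq> 0" using one_minus_ne0[OF assms(1) assms(1)] .
  have "((\<lambda>s. cmod (z - g s) / cmod (1 - cnj (g s) * z)) \<longlongrightarrow> cmod (z - z) / cmod (1 - cnj z * z)) F"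
    using ne by (intro tendsto_intros assms(2)) auto
  then show ?thesis by (simp add: pd_def)
qed

lemma sg_pd_small:
  assumes "holo_semigroup phi" "z \<in> unit_disc" "g > 0"
  shows "\<exists>h>0. \<forall>a. 0 \<le> a \<and> a \<le> h \<longrightarrow> pd z (phi a z) \<le> g"
proof -
  have "((\<lambda>s. pd z (phi s z)) \<longlongrightarrow> 0) (at_right 0)"
    using pd_tendsto0 sg_cont0[OF assms(1,2)] assms(2) by (simp add: unit_disc_def)
  then have "eventually (\<lambda>s. pd z (phi s z) < g) (at_right 0)"
    using assms(3) by (simp add: order_tendstoD)
  then obtain d where d: "d > 0" "\<And>s. 0 < s \<Longrightarrow> s < d \<Longrightarrow> pd z (phi s z) < g"
    by (auto simp: eventually_at_right_field)
  show ?thesis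
  proof (intro exI[of _ "d/2"] conjI allI impI)
    show "d/2 > 0" using d by simp
    fix a assume a: "0 \<le> a \<and> a \<le> d/2"
    show "pd z (phi a z) \<le> g"
    proof (cases "a = 0")
      case True then show ?thesis using sg_zero[OF assms(1,2)] assms(3) by simp
    next
      case False then show ?thesis using d a by (simp add: less_imp_le)
    qed
  qed
qed

lemma pd_half_bound:
  assumes a: "cmod a < 1" and b: "cmod b < 1" and p: "pd a b \<le> 1/2"
  shows "1 - cmod a \<ge> 3/16 * (1 - cmod b)"
proof -
  have ne: "cmod (1 - cnj b * a) > 0" using one_minus_ne0[OF a b] by simp
  have "(pd a b)^2 \<le> 1/4" using p pd_nonneg[of a b]
    by (metis power_mono power_one_over one_power2 power2_eq_square real_sqrt_four real_sqrt_pow2 zero_le_numeral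
       divide_nonneg_nonneg zero_le_one numeral_Bit0 power_divide)
  then have q: "1 - (pd a b)^2 \<ge> 3/4" by simp
  have l1: "cmod (1 - cnj b * a) \<ge> 1 - cmod b"
  proof -
    have "cmod (cnj b * a) \<le> cmod b" using a by (simp add: norm_mult mult_left_le)
    then show ?thesis using norm_triangle_ineq2[of 1 "cnj b * a"] by simp
  qed
  have "(1 - cmod b)^2 \<le> (cmod (1 - cnj b * a))^2" using l1 b by (intro power_mono) auto
  have e: "1 - (cmod a)^2 = (1 - (pd a b)^2) * (cmod (1 - cnj b * a))^2 / (1 - (cmod b)^2)"
  proof -
    have "(1 - (cmod b)^2) > 0" using b by (simp add: abs_square_less_1)
    then show ?thesis using pd_ident[OF a b] ne by (simp add: field_simps)
  qed
  have b2: "1 - (cmod b)^2 = (1 - cmod b) * (1 + cmod b)" by (simp add: power2_eq_square algebra_simps)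
  have pb: "1 - cmod b > 0" using b by simp
  define X where "X = (1 - cmod b) / (1 + cmod b)"
  have f1: "3/4 * (1 - cmod b)^2 / (1 - (cmod b)^2) \<le> 1 - (cmod a)^2"
    unfolding e
  proof (rule divide_right_mono)
    show "3 / 4 * (1 - cmod b)\<^sup>2 \<le> (1 - (pd a b)\<^sup>2) * (cmod (1 - cnj b * a))\<^sup>2"
      using q \<open>(1 - cmod b)^2 \<le> (cmod (1 - cnj b * a))^2\<close>
      by (intro mult_mono) auto
    show "0 \<le> 1 - (cmod b)\<^sup>2" using b by (simp add: abs_square_le_1)
  qed
  have f2: "3/4 * (1 - cmod b)^2 / (1 - (cmod b)^2) = 3/4 * X"
  proof -
    have "(1 - cmod b)^2 / ((1 - cmod b) * (1 + cmod b)) = (1 - cmod b) / (1 + cmod b)"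
      using pb by (simp add: power2_eq_square)
    then have "(1 - cmod b)^2 / (1 - (cmod b)^2) = X" unfolding b2 X_def .
    then show ?thesis by (metis times_divide_eq_right)
  qed
  have f3: "(1 - cmod b)/2 \<le> X"
    unfolding X_def
  proof (rule divide_left_mono)
    have n0: "cmod b \<ge> 0" by simp
    show "1 + cmod b \<le> 2" using b by linarith
    show "0 \<le> 1 - cmod b" using b by linarith
    show "0 < 2 * (1 + cmod b)" using n0 by (smt (verit))
  qed
  have f4: "1 - (cmod a)^2 \<le> 2 * (1 - cmod a)"
  proof -
    have "1 - (cmod a)^2 = (1 - cmod a) * (1 + cmod a)" by (simp add: power2_eq_square algebra_simps)
    also have "\<dots> \<le> (1 - cmod a) * 2" using a by (intro mult_left_mono) auto
    finally show ?thesis by simp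
  qed
  from f1 f2 have f5: "3/4 * X \<le> 1 - (cmod a)^2" by simp
  have "3/8 * (1 - cmod b) \<le> 3/4 * X" using f3 by simp
  then show ?thesis using f5 f4 by simp
qed



lemma pd_bound_norm:
  assumes z: "cmod z < 1" and w: "cmod w < 1" and bt: "1 - cmod w \<ge> \<beta>" and b0: "\<beta> > 0"
  shows "pd z w \<le> sqrt (1 - (1 - (cmod z)^2) * \<beta> / 4)"
    and "sqrt (1 - (1 - (cmod z)^2) * \<beta> / 4) < 1"
proof -
  have z2: "1 - (cmod z)^2 > 0" using z by (simp add: abs_square_less_1)
  have w2: "1 - (cmod w)^2 \<ge> \<beta>"
  proof -
    have "1 - (cmod w)^2 = (1 - cmod w) * (1 + cmod w)" by (simp add: power2_eq_square algebra_simps)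
    also have "\<dots> \<ge> (1 - cmod w) * 1" using w by (intro mult_left_mono) auto
    finally show ?thesis using bt by simp
  qed
  have d: "cmod (1 - cnj w * z) \<le> 2"
  proof -
    have "cmod (cnj w * z) \<le> 1" using z w by (simp add: norm_mult mult_le_one)
    then show ?thesis using norm_triangle_ineq4[of 1 "cnj w * z"] by simp
  qed
  have dp: "cmod (1 - cnj w * z) > 0" using one_minus_ne0[OF z w] by simp
  have d2: "(cmod (1 - cnj w * z))^2 \<le> 4" using d dp
    by (metis less_imp_le power_mono numeral_Bit0 power2_eq_square numeral_times_numeral mult_2 numeral_One power_one_right one_add_one semiring_norm(2) nat_numeral)
  have fr: "(1 - (cmod z)^2) * \<beta> / 4 \<le> (1 - (cmod z)^2) * (1 - (cmod w)^2) / (cmod (1 - cnj w * z))^2"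
  proof (rule frac_le)
    show "0 \<le> (1 - (cmod z)^2) * (1 - (cmod w)^2)" using z2 w2 b0 by simp
    show "(1 - (cmod z)^2) * \<beta> \<le> (1 - (cmod z)^2) * (1 - (cmod w)^2)" using z2 w2 by simp
    show "0 < (cmod (1 - cnj w * z))^2" using dp by simp
    show "(cmod (1 - cnj w * z))^2 \<le> 4" using d2 .
  qed
  have k: "(pd z w)^2 \<le> 1 - (1 - (cmod z)^2) * \<beta> / 4" using fr pd_ident[OF z w] by linarith
  show "pd z w \<le> sqrt (1 - (1 - (cmod z)^2) * \<beta> / 4)"
    using real_le_rsqrt[OF k] .
  show "sqrt (1 - (1 - (cmod z)^2) * \<beta> / 4) < 1"
    using z2 b0 by simp
qed

lemma pd_close:
  assumes a: "cmod a < 1" and b: "cmod b < 1" and p: "pd a b \<le> c" and c: "c < 1"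
  shows "(cmod (a - b))^2 \<le> (1 - (cmod b)^2) / (1 - c^2)"
proof -
  have p0: "pd a b \<ge> 0" by (rule pd_nonneg)
  have dp: "cmod (1 - cnj b * a) > 0" using one_minus_ne0[OF a b] by simp
  have c2: "c^2 < 1" using p0 p c by (simp add: abs_square_less_1)
  have pc: "(pd a b)^2 \<le> c^2" using p p0 by (simp add: power_mono)
  have eq: "(cmod (a - b))^2 = (pd a b)^2 * (cmod (1 - cnj b * a))^2"
    using dp by (simp add: pd_def power_divide)
  have "(cmod (1 - cnj b * a))^2 = (1 - (cmod a)^2) * (1 - (cmod b)^2) / (1 - (pd a b)^2)"
  proof -
    have pos: "1 - (pd a b)^2 > 0" using pc c2 by simp
    have e1: "(1 - (pd a b)^2) * (cmod (1 - cnj b * a))^2 = (1 - (cmod a)^2) * (1 - (cmod b)^2)"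
      using pd_ident[OF a b] dp by simp
    then show ?thesis using pos by (simp add: eq_divide_eq mult.commute)
  qed
  then have eq2: "(cmod (a - b))^2 = (pd a b)^2 * ((1 - (cmod a)^2) * (1 - (cmod b)^2)) / (1 - (pd a b)^2)"
    using eq by simp
  have "(pd a b)^2 * ((1 - (cmod a)^2) * (1 - (cmod b)^2)) \<le> 1 * (1 * (1 - (cmod b)^2))"
  proof (intro mult_mono)
    show "(pd a b)^2 \<le> 1" using pc c2 by simp
    show "1 - (cmod a)^2 \<le> 1" by simp
    show "1 - (cmod b)^2 \<le> 1 - (cmod b)^2" by simp
    show "0 \<le> 1 - (cmod b)^2" using b by (simp add: abs_square_le_1)
    show "0 \<le> (1 - (cmod a)^2) * (1 - (cmod b)^2)" using a b by (simp add: abs_square_le_1)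
  qed auto
  then have "(cmod (a - b))^2 \<le> (1 - (cmod b)^2) / (1 - (pd a b)^2)"
    unfolding eq2 using pc c2 by (simp add: divide_right_mono)
  also have "\<dots> \<le> (1 - (cmod b)^2) / (1 - c^2)"
    using pc c2 b by (intro divide_left_mono) (auto simp: abs_square_le_1 mult_pos_pos)
  finally show ?thesis .
qed



lemma sg_step_pd:
  assumes sg: "holo_semigroup phi" and z: "z \<in> unit_disc" and s: "s \<ge> 0" and a: "a \<ge> 0"
  shows "pd (phi s z) (phi (s + a) z) \<le> pd z (phi a z)"
  using schwarz_pick[OF sg_self[OF sg s] z sg_in[OF sg a z]] sg_add[OF sg s a z] by simp

lemma floor_split:
  assumes r: "r \<ge> 0" and h: "h > (0::real)"
  obtains j :: nat where "real j * h \<le> r" "r < real j * h + h" "real j \<le> r / h"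
proof
  let ?j = "nat \<lfloor>r / h\<rfloor>"
  have f0: "\<lfloor>r / h\<rfloor> \<ge> 0" using r h by simp
  then have rj: "real ?j = of_int \<lfloor>r / h\<rfloor>" by simp
  show "real ?j \<le> r / h" unfolding rj by simp
  then show "real ?j * h \<le> r" using h by (simp add: le_divide_eq)
  have "r / h < real ?j + 1" unfolding rj by linarith
  then show "r < real ?j * h + h" using h by (simp add: divide_less_eq algebra_simps)
qed

lemma sg_seg_bound:
  assumes sg: "holo_semigroup phi" and z: "z \<in> unit_disc"
  shows "\<exists>c<1. \<forall>r. 0 \<le> r \<and> r \<le> T \<longrightarrow> pd z (phi r z) \<le> c"
proof -
  have nz: "cmod z < 1" using z by (simp add: unit_disc_def)
  obtain h where h: "h > 0" "\<And>a. 0 \<le> a \<and> a \<le> h \<Longrightarrow> pd z (phi a z) \<le> 1/2"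
    using sg_pd_small[OF sg z, of "1/2"] by auto
  have nphi: "cmod (phi s z) < 1" if "s \<ge> 0" for s using sg_in[OF sg that z] by (simp add: unit_disc_def)
  have step: "1 - cmod (phi (s + a) z) \<ge> 3/16 * (1 - cmod (phi s z))"
    if s: "s \<ge> 0" and a: "0 \<le> a" "a \<le> h" for s a
  proof (rule pd_half_bound)
    show "cmod (phi (s + a) z) < 1" using nphi s a by simp
    show "cmod (phi s z) < 1" using nphi s by simp
    have "pd (phi s z) (phi (s + a) z) \<le> 1/2"
      using sg_step_pd[OF sg z s a(1)] h(2)[of a] a by simp
    then show "pd (phi (s + a) z) (phi s z) \<le> 1/2" by (simp add: pd_sym)
  qed
  have ind: "1 - cmod (phi (real j * h) z) \<ge> (3/16)^j * (1 - cmod z)" for j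
  proof (induction j)
    case 0 then show ?case using sg_zero[OF sg z] by simp
  next
    case (Suc j)
    have A: "1 - cmod (phi (real j * h + h) z) \<ge> 3/16 * (1 - cmod (phi (real j * h) z))"
      using step[of "real j * h" h] h(1) by simp
    have B: "3/16 * (1 - cmod (phi (real j * h) z)) \<ge> 3/16 * ((3/16)^j * (1 - cmod z))"
      using Suc by (rule mult_left_mono) simp
    have eq: "real (Suc j) * h = real j * h + h" by (simp add: algebra_simps)
    have eq2: "(3/16::real)^(Suc j) * (1 - cmod z) = 3/16 * ((3/16)^j * (1 - cmod z))" by simp
    show ?case unfolding eq eq2 using A B by linarith
  qed
  define N where "N = nat \<lceil>T / h\<rceil>"
  define \<beta> where "\<beta> = (3/16)^(N+1) * (1 - cmod z)"
  have b0: "\<beta> > 0" using nz by (simp add: \<beta>_def)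
  have bnd: "1 - cmod (phi r z) \<ge> \<beta>" if r: "0 \<le> r" "r \<le> T" for r
  proof -
    obtain j :: nat where j: "real j * h \<le> r" "r < real j * h + h" "real j \<le> r / h"
      using floor_split[OF r(1) h(1)] by blast
    have jN: "j \<le> N"
    proof -
      have "r / h \<le> T / h" using r h by (simp add: divide_right_mono)
      then have "real j \<le> of_int \<lceil>T / h\<rceil>" using j(3) by linarith
      then show ?thesis unfolding N_def by linarith
    qed
    have jh0: "real j * h \<ge> 0" using h by simp
    have "1 - cmod (phi (real j * h + (r - real j * h)) z) \<ge> 3/16 * (1 - cmod (phi (real j * h) z))"
      using step[OF jh0, of "r - real j * h"] j by simp
    then have "1 - cmod (phi r z) \<ge> 3/16 * ((3/16)^j * (1 - cmod z))"
      using ind[of j] by simp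
    moreover have "(3/16::real)^(N+1) \<le> (3/16)^(j+1)"
      using jN by (intro power_decreasing) auto
    then have "(3/16::real)^(N+1) * (1 - cmod z) \<le> (3/16)^(j+1) * (1 - cmod z)"
      using nz by (intro mult_right_mono) auto
    then have "\<beta> \<le> 3/16 * ((3/16)^j * (1 - cmod z))"
      unfolding \<beta>_def by (simp add: mult.assoc)
    ultimately show ?thesis by simp
  qed
  define c where "c = sqrt (1 - (1 - (cmod z)^2) * \<beta> / 4)"
  have "c < 1" unfolding c_def
  proof -
    have "(3/16::real)^(N+1) \<le> 1" by (rule power_le_one) auto
    moreover have "1 - cmod z \<le> 1" by simp
    ultimately have "\<beta> \<le> 1" unfolding \<beta>_def using nz
      by (metis mult_le_one less_imp_le diff_ge_0_iff_ge zero_le_divide_iff zero_le_numeral zero_le_power)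
    then show "sqrt (1 - (1 - (cmod z)^2) * \<beta> / 4) < 1"
      using pd_bound_norm(2)[OF nz, of 0 \<beta>] b0 by simp
  qed
  moreover have "\<forall>r. 0 \<le> r \<and> r \<le> T \<longrightarrow> pd z (phi r z) \<le> c"
    unfolding c_def using pd_bound_norm(1)[OF nz nphi _ b0] bnd by auto
  ultimately show ?thesis by blast
qed



lemma DW_tendsto:
  assumes "boundary_DW_point f \<tau>" "z \<in> unit_disc"
  shows "(\<lambda>n. (f ^^ n) z) \<longlonglongrightarrow> \<tau>"
proof -
  have "compact {z} \<and> {z} \<subseteq> unit_disc" using assms(2) by simp
  then have "uniform_limit {z} (\<lambda>n. f ^^ n) (\<lambda>_. \<tau>) sequentially"
    using assms(1) unfolding boundary_DW_point_def by blast
  from tendsto_uniform_limitI[OF this, of z] show ?thesis by simp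
qed

lemma common_tau:
  assumes sg: "holo_semigroup phi" and t0: "t0 > 0" and v: "v > 0"
    and d0: "boundary_DW_point (phi t0) \<tau>0" and dv: "boundary_DW_point (phi v) \<tau>v"
  shows "\<tau>v = \<tau>0"
proof -
  have z: "(0::complex) \<in> unit_disc" by (simp add: unit_disc_def)
  define b where "b = (\<lambda>m::nat. phi (real m * t0) 0)"
  define a where "a = (\<lambda>n::nat. phi (real n * v) 0)"
  have bl: "b \<longlonglongrightarrow> \<tau>0" using DW_tendsto[OF d0 z] sg_iter[OF sg _ z] t0 by (simp add: b_def)
  have al: "a \<longlonglongrightarrow> \<tau>v" using DW_tendsto[OF dv z] sg_iter[OF sg _ z] v by (simp add: a_def)
  have nt0: "cmod \<tau>0 = 1" using d0 by (simp add: boundary_DW_point_def)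
  obtain c where c: "c < 1" "\<And>r. 0 \<le> r \<and> r \<le> t0 \<Longrightarrow> pd 0 (phi r 0) \<le> c"
    using sg_seg_bound[OF sg z, of t0] by blast
  define m where "m = (\<lambda>n::nat. nat \<lfloor>real n * v / t0\<rfloor>)"
  have mprop: "real (m n) * t0 \<le> real n * v \<and> real n * v < real (m n) * t0 + t0" for n
  proof -
    have f0: "\<lfloor>real n * v / t0\<rfloor> \<ge> 0" using v t0 by simp
    then have rj: "real (m n) = of_int \<lfloor>real n * v / t0\<rfloor>" by (simp add: m_def)
    have "real (m n) \<le> real n * v / t0" unfolding rj by simp
    moreover have "real n * v / t0 < real (m n) + 1" unfolding rj by linarith
    ultimately show ?thesis using t0 by (simp add: le_divide_eq divide_less_eq algebra_simps)
  qed
  have mlim: "filterlim m sequentially sequentially"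
  proof -
    have "filterlim (\<lambda>n. real n * (v / t0)) at_top sequentially"
      using filterlim_at_top_mult_tendsto_pos[OF tendsto_const[of "v/t0"] _ filterlim_real_sequentially] v t0
      by simp
    then have "filterlim (\<lambda>n. real n * v / t0) at_top sequentially" by simp
    then have "filterlim (\<lambda>n. floor (real n * v / t0)) at_top sequentially"
      using filterlim_compose[OF filterlim_floor_sequentially] by blast
    then show ?thesis unfolding m_def using filterlim_compose[OF filterlim_nat_sequentially] by blast
  qed
  have bm: "(\<lambda>n. b (m n)) \<longlonglongrightarrow> \<tau>0" using filterlim_compose[OF bl mlim] .
  have close: "cmod (a n - b (m n)) \<le> sqrt ((1 - (cmod (b (m n)))^2) / (1 - c^2))" for n
  proof -
    define r where "r = real n * v - real (m n) * t0"
    have r: "0 \<le> r" "r \<le> t0" using mprop[of n] by (auto simp: r_def)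
    have mt: "real (m n) * t0 \<ge> 0" using t0 by simp
    have "a n = phi (real (m n) * t0) (phi r 0)"
      unfolding a_def using sg_add[OF sg mt r(1) z] by (simp add: r_def)
    then have "pd (a n) (b (m n)) \<le> pd (phi r 0) 0"
      unfolding b_def using schwarz_pick[OF sg_self[OF sg mt] sg_in[OF sg r(1) z] z] by simp
    also have "\<dots> \<le> c" using c(2)[of r] r by (simp add: pd_sym)
    finally have "pd (a n) (b (m n)) \<le> c" .
    moreover have "cmod (a n) < 1" "cmod (b (m n)) < 1"
      unfolding a_def b_def using sg_in[OF sg _ z] v t0 by (auto simp: unit_disc_def)
    ultimately have "(cmod (a n - b (m n)))^2 \<le> (1 - (cmod (b (m n)))^2) / (1 - c^2)"
      using pd_close c(1) by blast
    then show ?thesis using real_le_rsqrt by blast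
  qed
  have "(\<lambda>n. sqrt ((1 - (cmod (b (m n)))^2) / (1 - c^2))) \<longlonglongrightarrow> sqrt ((1 - (cmod \<tau>0)^2) / (1 - c^2))"
  proof (intro tendsto_intros bm)
    have "0 \<le> c" using c(2)[of 0] pd_nonneg[of 0 "phi 0 0"] t0 by linarith
    then have "c^2 < 1" using c(1) by (simp add: abs_square_less_1)
    then show "1 - c^2 \<noteq> 0" by simp
  qed
  then have sq0: "(\<lambda>n. sqrt ((1 - (cmod (b (m n)))^2) / (1 - c^2))) \<longlonglongrightarrow> 0" using nt0 by simp
  have "(\<lambda>n. a n - b (m n)) \<longlonglongrightarrow> 0"
    by (rule tendsto_norm_zero_cancel, rule tendsto_sandwich[OF _ _ tendsto_const sq0]) (use close in auto)
  then have "(\<lambda>n. (a n - b (m n)) + b (m n)) \<longlonglongrightarrow> 0 + \<tau>0" by (intro tendsto_intros bm)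
  then have "a \<longlonglongrightarrow> \<tau>0" by simp
  then show ?thesis using al LIMSEQ_unique by blast
qed



lemma tanh_artanh_real:
  assumes "\<bar>p\<bar> < (1::real)"
  shows "tanh (artanh p) = p"
proof -
  have p1: "1 + p > 0" "1 - p > 0" using assms by auto
  have "exp (- 2 * artanh p) = exp (- ln ((1 + p) / (1 - p)))" by (simp add: artanh_def)
  also have "\<dots> = inverse ((1 + p) / (1 - p))" using p1 by (simp add: exp_minus)
  also have "\<dots> = (1 - p) / (1 + p)" by simp
  finally have e: "exp (- 2 * artanh p) = (1 - p) / (1 + p)" .
  show ?thesis unfolding tanh_real_altdef e using p1 by (simp add: field_simps)
qed

lemma cay_holo:
  assumes "cmod \<tau> = 1"
  shows "cay \<tau> holomorphic_on unit_disc"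
  unfolding cay_def
proof (intro holomorphic_intros)
  fix z assume "z \<in> unit_disc"
  then show "\<tau> - z \<noteq> 0" using ne_tau[OF assms] by (simp add: unit_disc_def)
qed

locale psg =
  fixes phi :: "real \<Rightarrow> complex \<Rightarrow> complex" and \<tau> :: complex
  assumes sg: "holo_semigroup phi" and tau: "cmod \<tau> = 1"
    and jul: "\<And>v x. v \<ge> 0 \<Longrightarrow> x \<in> unit_disc \<Longrightarrow> Im (cay \<tau> x) \<le> Im (cay \<tau> (phi v x))"
begin

definition Y where "Y x = Im (cay \<tau> x)"
definition Dl where "Dl v x = cay \<tau> (phi v x) - cay \<tau> x"
definition E where "E v x = cmod (Dl v x) / Y x"

lemma Ypos: "x \<in> unit_disc \<Longrightarrow> Y x > 0"
  unfolding Y_def using Im_cay_pos[OF tau] by (simp add: unit_disc_def)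

lemma DlIm: "v \<ge> 0 \<Longrightarrow> x \<in> unit_disc \<Longrightarrow> Im (Dl v x) \<ge> 0"
  unfolding Dl_def using jul by simp

lemma Dl_add: "a \<ge> 0 \<Longrightarrow> b \<ge> 0 \<Longrightarrow> x \<in> unit_disc \<Longrightarrow> Dl (a + b) x = Dl a (phi b x) + Dl b x"
  unfolding Dl_def using sg_add[OF sg] by simp

lemma E_nonneg: "x \<in> unit_disc \<Longrightarrow> E v x \<ge> 0"
  unfolding E_def using Ypos by (simp add: less_imp_le)

lemma pd_Dl:
  assumes v: "v \<ge> 0" and x: "x \<in> unit_disc"
  shows "pd (phi v x) x = cmod (Dl v x) / cmod (Dl v x + \<i> * of_real (2 * Y x))"
proof -
  have nx: "cmod x < 1" and ny: "cmod (phi v x) < 1"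
    using x sg_in[OF sg v x] by (auto simp: unit_disc_def)
  have eq: "cay \<tau> (phi v x) - cnj (cay \<tau> x) = Dl v x + \<i> * of_real (2 * Y x)"
    unfolding Dl_def Y_def by (simp add: complex_eq_iff)
  show ?thesis unfolding eq[symmetric] unfolding Dl_def by (rule pd_cay[OF tau ny nx])
qed

lemma den_ge:
  assumes v: "v \<ge> 0" and x: "x \<in> unit_disc"
  shows "cmod (Dl v x + \<i> * of_real (2 * Y x)) \<ge> 2 * Y x"
    and "cmod (Dl v x + \<i> * of_real (2 * Y x)) \<le> cmod (Dl v x) + 2 * Y x"
proof -
  have "Im (Dl v x + \<i> * of_real (2 * Y x)) = Im (Dl v x) + 2 * Y x" by simp
  then show "cmod (Dl v x + \<i> * of_real (2 * Y x)) \<ge> 2 * Y x"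
    using abs_Im_le_cmod[of "Dl v x + \<i> * of_real (2 * Y x)"] DlIm[OF v x] by linarith
  have "cmod (\<i> * complex_of_real (2 * Y x)) = 2 * Y x" using Ypos[OF x]
    by (simp only: norm_mult norm_ii norm_of_real)
  then show "cmod (Dl v x + \<i> * of_real (2 * Y x)) \<le> cmod (Dl v x) + 2 * Y x"
    using norm_triangle_ineq[of "Dl v x" "\<i> * of_real (2 * Y x)"] by linarith
qed

lemma pd_le_E:
  assumes v: "v \<ge> 0" and x: "x \<in> unit_disc"
  shows "pd (phi v x) x \<le> E v x / 2"
proof -
  have y: "Y x > 0" using Ypos[OF x] .
  have "cmod (Dl v x) / cmod (Dl v x + \<i> * of_real (2 * Y x)) \<le> cmod (Dl v x) / (2 * Y x)"
  proof (rule divide_left_mono)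
    show "2 * Y x \<le> cmod (Dl v x + \<i> * of_real (2 * Y x))" using den_ge(1)[OF v x] .
    show "0 \<le> cmod (Dl v x)" by simp
    have "cmod (Dl v x + \<i> * of_real (2 * Y x)) > 0" using den_ge(1)[OF v x] y by linarith
    then show "0 < cmod (Dl v x + \<i> * of_real (2 * Y x)) * (2 * Y x)" using y by simp
  qed
  then show ?thesis unfolding pd_Dl[OF v x] E_def by simp
qed

lemma E_le_pd:
  assumes v: "v \<ge> 0" and x: "x \<in> unit_disc" and p: "pd (phi v x) x \<le> 1/2"
  shows "E v x \<le> 4 * pd (phi v x) x"
proof -
  have y: "Y x > 0" using Ypos[OF x] .
  let ?d = "cmod (Dl v x + \<i> * of_real (2 * Y x))"
  have dpos: "?d > 0" using den_ge(1)[OF v x] y by linarith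
  have e: "cmod (Dl v x) = pd (phi v x) x * ?d" using pd_Dl[OF v x] dpos by simp
  also have "\<dots> \<le> pd (phi v x) x * (cmod (Dl v x) + 2 * Y x)"
    using den_ge(2)[OF v x] pd_nonneg by (intro mult_left_mono) auto
  finally have "cmod (Dl v x) \<le> pd (phi v x) x * cmod (Dl v x) + 2 * pd (phi v x) x * Y x"
    by (simp add: algebra_simps)
  moreover have "pd (phi v x) x * cmod (Dl v x) \<le> cmod (Dl v x) / 2"
    using p by (metis mult_right_mono norm_ge_zero times_divide_eq_left mult_1 mult.commute)
  ultimately have "cmod (Dl v x) \<le> 4 * pd (phi v x) x * Y x" by simp
  then show ?thesis unfolding E_def using y by (simp add: divide_le_eq)
qed

lemma E_add:
  assumes a: "a \<ge> 0" and b: "b \<ge> 0" and x: "x \<in> unit_disc"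
  shows "E (a + b) x \<le> E a (phi b x) * (1 + E b x) + E b x"
proof -
  have xb: "phi b x \<in> unit_disc" using sg_in[OF sg b x] .
  have y: "Y x > 0" using Ypos[OF x] .
  have yy: "Y x \<le> Y (phi b x)" unfolding Y_def using jul[OF b x] .
  have "E (a + b) x \<le> (cmod (Dl a (phi b x)) + cmod (Dl b x)) / Y x"
    unfolding E_def Dl_add[OF a b x] using y by (intro divide_right_mono norm_triangle_ineq) auto
  also have "\<dots> = cmod (Dl a (phi b x)) / Y x + E b x" by (simp add: E_def add_divide_distrib)
  finally have r0: "E (a + b) x \<le> cmod (Dl a (phi b x)) / Y x + E b x" .
  have yb: "Y (phi b x) \<le> Y x * (1 + E b x)"
  proof -
    have "Y (phi b x) = Y x + Im (Dl b x)" by (simp add: Y_def Dl_def)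
    also have "\<dots> \<le> Y x + cmod (Dl b x)" using abs_Im_le_cmod[of "Dl b x"] by linarith
    also have "\<dots> = Y x * (1 + E b x)" using y by (simp add: E_def field_simps)
    finally show ?thesis .
  qed
  have "cmod (Dl a (phi b x)) / Y x = E a (phi b x) * (Y (phi b x) / Y x)"
    using y yy by (simp add: E_def)
  also have "\<dots> \<le> E a (phi b x) * (1 + E b x)"
  proof (rule mult_left_mono)
    show "Y (phi b x) / Y x \<le> 1 + E b x" using yb y by (simp add: divide_le_eq mult.commute)
    show "0 \<le> E a (phi b x)" using E_nonneg[OF xb] .
  qed
  finally show ?thesis using r0 by simp
qed

lemma Dl_holo: "a \<ge> 0 \<Longrightarrow> Dl a holomorphic_on unit_disc"
proof -
  assume a: "a \<ge> 0"
  have h1: "phi a holomorphic_on unit_disc" and h2: "phi a ` unit_disc \<subseteq> unit_disc"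
    using sg_self[OF sg a] by (auto simp: holo_self_map_def)
  have "cay \<tau> \<circ> phi a holomorphic_on unit_disc"
    using holomorphic_on_compose_gen[OF h1 cay_holo[OF tau] h2] .
  then have "(\<lambda>x. cay \<tau> (phi a x) - cay \<tau> x) holomorphic_on unit_disc"
    using cay_holo[OF tau] by (intro holomorphic_intros) (auto simp: o_def)
  then show ?thesis by (simp add: Dl_def[abs_def])
qed

lemma Im_mono:
  assumes "0 \<le> a" "a \<le> b" "x \<in> unit_disc"
  shows "Im (Dl a x) \<le> Im (Dl b x)"
proof -
  have "Dl b x = Dl (b - a) (phi a x) + Dl a x" using Dl_add[of "b - a" a x] assms by simp
  moreover have "Im (Dl (b - a) (phi a x)) \<ge> 0" using DlIm sg_in[OF sg] assms by simp
  ultimately show ?thesis by simp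
qed

lemma est:
  assumes a: "a \<ge> 0" and x: "x \<in> unit_disc" and q: "q \<in> unit_disc" and c: "pd x q \<le> c" "c < 1"
  shows "cmod (Dl a q - Dl a x) \<le> 2 * c / (1 - c) * Im (Dl a x)"
  using halfplane_est[OF tau Dl_holo[OF a] _ x q c] DlIm[OF a] by blast

end



context psg begin

lemma Dl_zero: "x \<in> unit_disc \<Longrightarrow> Dl 0 x = 0"
  unfolding Dl_def using sg_zero[OF sg] by simp

lemma core:
  assumes t0: "t0 > 0" and z0: "z0 \<in> unit_disc"
    and eps: "(\<lambda>n. E t0 (phi (real n * t0) z0)) \<longlonglongrightarrow> 0"
    and v: "0 \<le> v" "v \<le> t0"
  shows "(\<lambda>n. E v (phi (real n * t0) z0)) \<longlonglongrightarrow> 0"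
proof -
  define p where "p n = phi (real n * t0) z0" for n :: nat
  have pD: "p n \<in> unit_disc" for n unfolding p_def using sg_in[OF sg _ z0] t0 by simp
  obtain c where c: "c < 1" "\<And>r. 0 \<le> r \<and> r \<le> t0 \<Longrightarrow> pd z0 (phi r z0) \<le> c"
    using sg_seg_bound[OF sg z0, of t0] by blast
  have c0: "c \<ge> 0" using c(2)[of 0] pd_nonneg[of z0 "phi 0 z0"] t0 by linarith
  define K where "K = 2 * c / (1 - c)"
  have K0: "K \<ge> 0" unfolding K_def using c c0 by simp
  have step_pd: "pd (p n) (phi r (p n)) \<le> pd z0 (phi r z0)" if r: "0 \<le> r" for n r
  proof -
    have s: "real n * t0 \<ge> 0" using t0 by simp
    have "phi r (p n) = phi (real n * t0 + r) z0"
      unfolding p_def using sg_add[OF sg r s z0] by (simp add: add.commute)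
    then show ?thesis using sg_step_pd[OF sg z0 s r] by (simp add: p_def)
  qed
  have approx: "cmod (Dl (a + b) (p n) - Dl a (p n) - Dl b (p n)) \<le> K * cmod (Dl t0 (p n))"
    if a: "0 \<le> a" "a \<le> t0" and b: "0 \<le> b" "b \<le> t0" for n a b
  proof -
    have pb: "phi b (p n) \<in> unit_disc" using sg_in[OF sg b(1) pD] .
    have "pd (p n) (phi b (p n)) \<le> c" using step_pd[OF b(1)] c(2)[of b] b by (meson order.trans)
    then have "cmod (Dl a (phi b (p n)) - Dl a (p n)) \<le> K * Im (Dl a (p n))"
      using est[OF a(1) pD pb _ c(1)] unfolding K_def by blast
    also have "\<dots> \<le> K * Im (Dl t0 (p n))" using Im_mono[OF a pD] K0 by (rule mult_left_mono)
    also have "\<dots> \<le> K * cmod (Dl t0 (p n))" using K0 abs_Im_le_cmod[of "Dl t0 (p n)"]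
      by (intro mult_left_mono) auto
    finally show ?thesis using Dl_add[OF a(1) b(1) pD] by simp
  qed
  show ?thesis
  proof (rule LIMSEQ_I)
    fix \<gamma> :: real assume g: "\<gamma> > 0"
    obtain h where h: "h > 0" "\<And>a. 0 \<le> a \<and> a \<le> h \<Longrightarrow> pd z0 (phi a z0) \<le> min (1/2) (\<gamma>/8)"
      using sg_pd_small[OF sg z0, of "min (1/2) (\<gamma>/8)"] g by auto
    have small: "cmod (Dl a (p n)) \<le> \<gamma>/2 * Y (p n)" if a: "0 \<le> a" "a \<le> h" for a n
    proof -
      have "pd (phi a (p n)) (p n) \<le> min (1/2) (\<gamma>/8)"
        using step_pd[OF a(1), of n] h(2)[of a] a by (simp add: pd_sym)
      then have "E a (p n) \<le> 4 * (\<gamma>/8)"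
        using E_le_pd[OF a(1) pD, of n] by simp
      then show ?thesis using Ypos[OF pD, of n] by (simp add: E_def divide_le_eq)
    qed
    define N where "N = nat \<lceil>t0 / h\<rceil> + 1"
    have N1: "N \<ge> 1" by (simp add: N_def)
    define u where "u = t0 / real N"
    have u0: "u > 0" using t0 N1 by (simp add: u_def)
    have Nu: "real N * u = t0" using N1 by (simp add: u_def)
    have uh: "u \<le> h"
    proof -
      have "t0 / h \<le> real N" unfolding N_def by linarith
      then have "t0 \<le> real N * h" using h(1) by (simp add: divide_le_eq)
      then show ?thesis unfolding u_def using N1 by (simp add: divide_le_eq mult.commute)
    qed
    have ut0: "u \<le> t0"
    proof -
      have "1 * u \<le> real N * u" using N1 u0 by (intro mult_right_mono) auto
      then show ?thesis using Nu by simp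
    qed
    define M where "M = real N * (1 + 2 * K) + K"
    have M0: "M \<ge> 0" using K0 by (simp add: M_def)
    have ev: "eventually (\<lambda>n. E t0 (p n) < \<gamma> / (2 * (M + 1))) sequentially"
      using eps g M0 unfolding p_def by (intro order_tendstoD) auto
    show "\<exists>no. \<forall>n\<ge>no. norm (E v (phi (real n * t0) z0) - 0) < \<gamma>"
    proof -
      obtain no where no: "\<And>n. n \<ge> no \<Longrightarrow> E t0 (p n) < \<gamma> / (2 * (M + 1))"
        using ev unfolding eventually_sequentially by blast
      have bound: "E v (p n) \<le> \<gamma>/2 + M * E t0 (p n)" for n
      proof -
        let ?x = "p n"
        let ?e = "cmod (Dl t0 ?x)"
        have y: "Y ?x > 0" using Ypos[OF pD] .
        have ind: "j \<le> N \<Longrightarrow> cmod (Dl (real j * u) ?x - of_nat j * Dl u ?x) \<le> real j * K * ?e" for j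
        proof (induction j)
          case 0 then show ?case using Dl_zero[OF pD] by simp
        next
          case (Suc j)
          have ju: "0 \<le> real j * u" "real j * u \<le> t0"
            using u0 Suc.prems Nu by (auto intro: mult_right_mono simp: Nu[symmetric])
          have A: "cmod (Dl (u + real j * u) ?x - Dl u ?x - Dl (real j * u) ?x) \<le> K * ?e"
            using approx[of u "real j * u" n] u0 ut0 ju by simp
          have B: "cmod (Dl (real j * u) ?x - of_nat j * Dl u ?x) \<le> real j * K * ?e"
            using Suc by simp
          have "Dl (real (Suc j) * u) ?x - of_nat (Suc j) * Dl u ?x
              = (Dl (u + real j * u) ?x - Dl u ?x - Dl (real j * u) ?x) + (Dl (real j * u) ?x - of_nat j * Dl u ?x)"
            by (simp add: algebra_simps)
          then have "cmod (Dl (real (Suc j) * u) ?x - of_nat (Suc j) * Dl u ?x) \<le> K * ?e + real j * K * ?e"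
            using norm_triangle_le[OF add_mono[OF A B]] by simp
          then show ?case by (simp add: algebra_simps)
        qed
        have IN: "cmod (Dl t0 ?x - of_nat N * Dl u ?x) \<le> real N * K * ?e"
          using ind[of N] Nu by simp
        have "real N * cmod (Dl u ?x) = cmod (of_nat N * Dl u ?x)" by (simp add: norm_mult)
        also have "\<dots> \<le> cmod (Dl t0 ?x) + cmod (Dl t0 ?x - of_nat N * Dl u ?x)"
          using norm_triangle_ineq4[of "Dl t0 ?x" "Dl t0 ?x - of_nat N * Dl u ?x"] by simp
        also have "\<dots> \<le> ?e + real N * K * ?e" using IN by simp
        finally have "real N * cmod (Dl u ?x) \<le> real N * ((1/real N + K) * ?e)"
          using N1 by (simp add: algebra_simps)
        then have Du1: "cmod (Dl u ?x) \<le> (1/real N + K) * ?e" using N1 by simp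
        have "(1/real N + K) * ?e \<le> (1 + K) * ?e"
          using N1 by (intro mult_right_mono) auto
        then have Du: "cmod (Dl u ?x) \<le> (1 + K) * ?e" using Du1 by linarith
        obtain j :: nat where j: "real j * u \<le> v" "v < real j * u + u" "real j \<le> v / u"
          using floor_split[OF v(1) u0] by blast
        have jN: "j \<le> N"
        proof -
          have "real j * u \<le> real N * u" using j(1) v(2) Nu by simp
          then show ?thesis using u0 by simp
        qed
        define v' where "v' = v - real j * u"
        have v': "0 \<le> v'" "v' \<le> h" "v' \<le> t0" using j uh ut0 by (auto simp: v'_def)
        have ju: "0 \<le> real j * u" "real j * u \<le> t0" using j(1) v u0 by auto
        have C: "cmod (Dl (v' + real j * u) ?x - Dl v' ?x - Dl (real j * u) ?x) \<le> K * ?e"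
          using approx[OF v'(1,3) ju] .
        have vv: "v' + real j * u = v" by (simp add: v'_def)
        have "cmod (Dl v ?x) \<le> cmod (Dl v' ?x) + cmod (Dl (real j * u) ?x) + K * ?e"
        proof -
          have e: "Dl v ?x = (Dl v ?x - Dl v' ?x - Dl (real j * u) ?x) + Dl v' ?x + Dl (real j * u) ?x" by simp
          have "cmod (Dl v ?x) \<le> cmod (Dl v ?x - Dl v' ?x - Dl (real j * u) ?x) + cmod (Dl v' ?x) + cmod (Dl (real j * u) ?x)"
            by (subst e) (meson norm_triangle_ineq order_trans add_right_mono)
          then show ?thesis using C unfolding vv by linarith
        qed
        also have "cmod (Dl (real j * u) ?x) \<le> real j * cmod (Dl u ?x) + real j * K * ?e"
        proof -
          have "cmod (Dl (real j * u) ?x) \<le> cmod (of_nat j * Dl u ?x) + cmod (Dl (real j * u) ?x - of_nat j * Dl u ?x)"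
            using norm_triangle_ineq[of "of_nat j * Dl u ?x" "Dl (real j * u) ?x - of_nat j * Dl u ?x"] by simp
          then show ?thesis using ind[OF jN] by (simp add: norm_mult)
        qed
        also have "real j * cmod (Dl u ?x) \<le> real N * ((1 + K) * ?e)"
          using jN Du by (intro mult_mono) auto
        also have "real j * K * ?e \<le> real N * K * ?e"
          using jN K0 by (intro mult_right_mono) auto
        finally have "cmod (Dl v ?x) \<le> cmod (Dl v' ?x) + (real N * ((1 + K) * ?e) + real N * K * ?e) + K * ?e"
          by simp
        also have "cmod (Dl v' ?x) \<le> \<gamma>/2 * Y ?x" using small[OF v'(1,2)] .
        finally have "cmod (Dl v ?x) \<le> \<gamma>/2 * Y ?x + M * ?e" by (simp add: M_def algebra_simps)
        then have "cmod (Dl v ?x) / Y ?x \<le> \<gamma>/2 + M * (?e / Y ?x)"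
          using y by (simp add: divide_le_eq algebra_simps)
        then show ?thesis by (simp add: E_def)
      qed
      have "\<forall>n\<ge>no. norm (E v (p n) - 0) < \<gamma>"
      proof (intro allI impI)
        fix n assume n: "n \<ge> no"
        have "M * E t0 (p n) \<le> M * (\<gamma> / (2 * (M + 1)))"
          using no[OF n] M0 by (intro mult_left_mono) auto
        also have "\<dots> < \<gamma> / 2"
          using g M0 by (simp add: field_simps)
        finally have "E v (p n) < \<gamma>" using bound[of n] by simp
        then show "norm (E v (p n) - 0) < \<gamma>" using E_nonneg[OF pD] by simp
      qed
      then show ?thesis unfolding p_def by blast
    qed
  qed
qed

end



context psg begin

lemma cont_base:
  assumes t0: "t0 > 0" and z0: "z0 \<in> unit_disc"
    and eps: "(\<lambda>n. E t0 (phi (real n * t0) z0)) \<longlonglongrightarrow> 0"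
    and v: "0 \<le> v" "v \<le> t0"
  shows "((\<lambda>s. E v (phi s z0)) \<longlongrightarrow> 0) at_top"
proof -
  define p where "p n = phi (real n * t0) z0" for n :: nat
  have pD: "p n \<in> unit_disc" for n unfolding p_def using sg_in[OF sg _ z0] t0 by simp
  have cn: "(\<lambda>n. E v (p n)) \<longlonglongrightarrow> 0" using core[OF t0 z0 eps v] unfolding p_def .
  define m where "m s = nat \<lfloor>s / t0\<rfloor>" for s :: real
  have mlim: "filterlim m sequentially at_top"
  proof -
    have "filterlim (\<lambda>s::real. s * (1 / t0)) at_top at_top"
      using filterlim_at_top_mult_tendsto_pos[OF tendsto_const[of "1/t0"] _ filterlim_ident] t0 by simp
    then have "filterlim (\<lambda>s::real. s / t0) at_top at_top" by simp
    then have "filterlim (\<lambda>s. floor (s / t0)) at_top at_top"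
      using filterlim_compose[OF filterlim_floor_sequentially] by blast
    then show ?thesis unfolding m_def using filterlim_compose[OF filterlim_nat_sequentially] by blast
  qed
  have cm: "((\<lambda>s. E v (p (m s))) \<longlongrightarrow> 0) at_top" using filterlim_compose[OF cn mlim] .
  have ev1: "eventually (\<lambda>s. E v (p (m s)) \<le> 1) at_top"
    using order_tendstoD(2)[OF cm, of 1] by (rule eventually_mono) auto
  have key: "E v (phi s z0) \<le> 2 * E v (p (m s))" if s: "s \<ge> 0" and e1: "E v (p (m s)) \<le> 1" for s
  proof -
    have f0: "\<lfloor>s / t0\<rfloor> \<ge> 0" using s t0 by simp
    then have rj: "real (m s) = of_int \<lfloor>s / t0\<rfloor>" by (simp add: m_def)
    have "real (m s) \<le> s / t0" unfolding rj by simp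
    then have mt: "real (m s) * t0 \<le> s" using t0 by (simp add: le_divide_eq)
    define s' where "s' = s - real (m s) * t0"
    have s': "s' \<ge> 0" using mt by (simp add: s'_def)
    have mt0: "real (m s) * t0 \<ge> 0" using t0 by simp
    have ws: "phi s z0 = phi s' (p (m s))"
      unfolding p_def using sg_add[OF sg s' mt0 z0] by (simp add: s'_def)
    have comm: "phi v (phi s' x) = phi s' (phi v x)" if "x \<in> unit_disc" for x
      using sg_add[OF sg v(1) s' that] sg_add[OF sg s' v(1) that] by (simp add: add.commute)
    have "pd (phi v (phi s z0)) (phi s z0) = pd (phi s' (phi v (p (m s)))) (phi s' (p (m s)))"
      unfolding ws comm[OF pD] ..
    also have "\<dots> \<le> pd (phi v (p (m s))) (p (m s))"
      using schwarz_pick[OF sg_self[OF sg s'] sg_in[OF sg v(1) pD] pD] .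
    also have "\<dots> \<le> E v (p (m s)) / 2" using pd_le_E[OF v(1) pD] .
    finally have ps: "pd (phi v (phi s z0)) (phi s z0) \<le> E v (p (m s)) / 2" .
    have wD: "phi s z0 \<in> unit_disc" using sg_in[OF sg s z0] .
    have "E v (phi s z0) \<le> 4 * pd (phi v (phi s z0)) (phi s z0)"
      using E_le_pd[OF v(1) wD] ps e1 by simp
    then show ?thesis using ps by simp
  qed
  show ?thesis
  proof (rule tendsto_sandwich[OF _ _ tendsto_const])
    show "eventually (\<lambda>s. 0 \<le> E v (phi s z0)) at_top"
      using eventually_ge_at_top[of 0] by (rule eventually_mono) (use E_nonneg sg_in[OF sg _ z0] in auto)
    show "eventually (\<lambda>s. E v (phi s z0) \<le> 2 * E v (p (m s))) at_top"
      using eventually_conj[OF eventually_ge_at_top[of 0] ev1] by (rule eventually_mono) (use key in auto)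
    show "((\<lambda>s. 2 * E v (p (m s))) \<longlongrightarrow> 0) at_top" using tendsto_mult_right_zero[OF cm] by simp
  qed
qed

lemma cont_all:
  assumes t0: "t0 > 0" and z0: "z0 \<in> unit_disc"
    and eps: "(\<lambda>n. E t0 (phi (real n * t0) z0)) \<longlonglongrightarrow> 0"
  shows "\<forall>v. 0 \<le> v \<and> v \<le> real k * t0 + t0 \<longrightarrow> ((\<lambda>s. E v (phi s z0)) \<longlongrightarrow> 0) at_top"
proof (induction k)
  case 0 then show ?case using cont_base[OF t0 z0 eps] by simp
next
  case (Suc k)
  show ?case
  proof (intro allI impI)
    fix v assume v: "0 \<le> v \<and> v \<le> real (Suc k) * t0 + t0"
    show "((\<lambda>s. E v (phi s z0)) \<longlongrightarrow> 0) at_top"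
    proof (cases "v \<le> t0")
      case True then show ?thesis using cont_base[OF t0 z0 eps] v by simp
    next
      case False
      define r where "r = v - t0"
      have r: "0 \<le> r" "r \<le> real k * t0 + t0" using v False by (auto simp: r_def algebra_simps)
      have IH: "((\<lambda>s. E r (phi s z0)) \<longlongrightarrow> 0) at_top" using Suc r by blast
      have B: "((\<lambda>s. E t0 (phi s z0)) \<longlongrightarrow> 0) at_top" using cont_base[OF t0 z0 eps] t0 by simp
      have sh: "filterlim (\<lambda>s. t0 + s) at_top at_top" using filterlim_tendsto_add_at_top[OF tendsto_const[of t0] filterlim_ident] .
      have IH2: "((\<lambda>s. E r (phi (t0 + s) z0)) \<longlongrightarrow> 0) at_top"
        using filterlim_compose[OF IH sh] .
      have lim: "((\<lambda>s. E r (phi (t0 + s) z0) * (1 + E t0 (phi s z0)) + E t0 (phi s z0)) \<longlongrightarrow> 0 * (1 + 0) + 0) at_top"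
        by (intro tendsto_intros IH2 B)
      have ub: "E v (phi s z0) \<le> E r (phi (t0 + s) z0) * (1 + E t0 (phi s z0)) + E t0 (phi s z0)" if s: "s \<ge> 0" for s
      proof -
        have x: "phi s z0 \<in> unit_disc" using sg_in[OF sg s z0] .
        have "E (r + t0) (phi s z0) \<le> E r (phi t0 (phi s z0)) * (1 + E t0 (phi s z0)) + E t0 (phi s z0)"
          using E_add[OF r(1) _ x] t0 by simp
        then show ?thesis using sg_add[OF sg _ s z0, of t0] t0 by (simp add: r_def)
      qed
      show ?thesis
      proof (rule tendsto_sandwich[OF _ _ tendsto_const])
        show "eventually (\<lambda>s. 0 \<le> E v (phi s z0)) at_top"
          using eventually_ge_at_top[of 0] by (rule eventually_mono) (use E_nonneg sg_in[OF sg _ z0] in auto)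
        show "eventually (\<lambda>s. E v (phi s z0) \<le> E r (phi (t0 + s) z0) * (1 + E t0 (phi s z0)) + E t0 (phi s z0)) at_top"
          using eventually_ge_at_top[of 0] by (rule eventually_mono) (use ub in auto)
        show "((\<lambda>s. E r (phi (t0 + s) z0) * (1 + E t0 (phi s z0)) + E t0 (phi s z0)) \<longlongrightarrow> 0) at_top"
          using lim by simp
      qed
    qed
  qed
qed

end



lemma hyp_pd: "hyp_dist a b = artanh (pd a b)"
  by (simp add: hyp_dist_def pd_def)

theorem lemma5p1:
  fixes phi :: "real \<Rightarrow> complex \<Rightarrow> complex"
  assumes "holo_semigroup phi"
    and "\<forall>t>0. parabolic (phi t)"
    and "\<exists>t0>0. zero_hyp_step (phi t0)"
  shows "\<forall>t>0. zero_hyp_step (phi t)"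
proof -
  note sg = assms(1)
  obtain t0 where t0: "t0 > 0" "zero_hyp_step (phi t0)" using assms(3) by blast
  obtain z0 where z0: "z0 \<in> unit_disc"
    and hz: "(\<lambda>n. hyp_dist ((phi t0 ^^ n) z0) ((phi t0 ^^ Suc n) z0)) \<longlonglongrightarrow> 0"
    using t0(2) unfolding zero_hyp_step_def by blast
  obtain \<tau> where dw: "boundary_DW_point (phi t0) \<tau>" and ad0: "angular_derivative (phi t0) \<tau> 1"
    using assms(2) t0(1) unfolding parabolic_def by blast
  have tau: "cmod \<tau> = 1" using dw by (simp add: boundary_DW_point_def)
  have jul: "Im (cay \<tau> x) \<le> Im (cay \<tau> (phi v x))" if v: "v \<ge> 0" and x: "x \<in> unit_disc" for v x
  proof (cases "v = 0")
    case True then show ?thesis using sg_zero[OF sg x] by simp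
  next
    case False
    then have vp: "v > 0" using v by simp
    obtain \<tau>v where dv: "boundary_DW_point (phi v) \<tau>v" and adv: "angular_derivative (phi v) \<tau>v 1"
      using assms(2) vp unfolding parabolic_def by blast
    have "\<tau>v = \<tau>" using common_tau[OF sg t0(1) vp dw dv] .
    then show ?thesis using julia[OF sg_self[OF sg v] tau _ x] adv by simp
  qed
  interpret psg phi \<tau> using sg tau jul by unfold_locales auto
  define p where "p n = phi (real n * t0) z0" for n :: nat
  have pD: "p n \<in> unit_disc" for n unfolding p_def using sg_in[OF sg _ z0] t0 by simp
  have pdl: "(\<lambda>n. pd (p n) (phi t0 (p n))) \<longlonglongrightarrow> 0"
  proof -
    have it: "(phi t0 ^^ n) z0 = p n" for n using sg_iter[OF sg _ z0] t0 by (simp add: p_def)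
    have h2: "(\<lambda>n. artanh (pd (p n) (phi t0 (p n)))) \<longlonglongrightarrow> 0"
      using hz by (simp add: it hyp_pd)
    have "(\<lambda>n. tanh (artanh (pd (p n) (phi t0 (p n))))) \<longlonglongrightarrow> tanh 0"
      by (intro tendsto_intros h2) simp
    moreover have "tanh (artanh (pd (p n) (phi t0 (p n)))) = pd (p n) (phi t0 (p n))" for n
    proof (rule tanh_artanh_real)
      have "pd (p n) (phi t0 (p n)) < 1"
        using pd_lt1 pD[of n] sg_in[OF sg _ pD, of t0] t0 by (simp add: unit_disc_def)
      then show "\<bar>pd (p n) (phi t0 (p n))\<bar> < 1" using pd_nonneg by simp
    qed
    ultimately show ?thesis by simp
  qed
  have eps: "(\<lambda>n. E t0 (phi (real n * t0) z0)) \<longlonglongrightarrow> 0"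
    unfolding p_def[symmetric]
  proof (rule tendsto_sandwich[OF _ _ tendsto_const])
    show "eventually (\<lambda>n. 0 \<le> E t0 (p n)) sequentially" using E_nonneg[OF pD] by simp
    have "eventually (\<lambda>n. pd (p n) (phi t0 (p n)) < 1/2) sequentially"
      using order_tendstoD(2)[OF pdl, of "1/2"] by simp
    then show "eventually (\<lambda>n. E t0 (p n) \<le> 4 * pd (p n) (phi t0 (p n))) sequentially"
      by (rule eventually_mono) (use E_le_pd[OF _ pD] t0 pd_sym in \<open>auto simp: less_imp_le\<close>)
    show "(\<lambda>n. 4 * pd (p n) (phi t0 (p n))) \<longlonglongrightarrow> 0"
      using tendsto_mult_right_zero[OF pdl] by simp
  qed
  show ?thesis
  proof (intro allI impI)
    fix t :: real assume t: "t > 0"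
    obtain k :: nat where k: "t / t0 \<le> real k" using real_arch_simple by blast
    have "t \<le> real k * t0 + t0" using k t0(1) by (simp add: divide_le_eq)
    then have ct: "((\<lambda>s. E t (phi s z0)) \<longlongrightarrow> 0) at_top"
      using cont_all[OF t0(1) z0 eps, of k] t by auto
    have fl: "filterlim (\<lambda>n. real n * t) at_top sequentially"
      using filterlim_at_top_mult_tendsto_pos[OF tendsto_const[of t] t filterlim_real_sequentially] .
    define q where "q n = phi (real n * t) z0" for n :: nat
    have qD: "q n \<in> unit_disc" for n unfolding q_def using sg_in[OF sg _ z0] t by simp
    have Eq: "(\<lambda>n. E t (q n)) \<longlonglongrightarrow> 0" unfolding q_def using filterlim_compose[OF ct fl] .
    have pq: "(\<lambda>n. pd (q n) (phi t (q n))) \<longlonglongrightarrow> 0"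
    proof (rule tendsto_sandwich[OF _ _ tendsto_const])
      show "eventually (\<lambda>n. 0 \<le> pd (q n) (phi t (q n))) sequentially" using pd_nonneg by simp
      show "eventually (\<lambda>n. pd (q n) (phi t (q n)) \<le> E t (q n) / 2) sequentially"
        using pd_le_E[OF _ qD] t by (simp add: pd_sym less_imp_le)
      show "(\<lambda>n. E t (q n) / 2) \<longlonglongrightarrow> 0" using tendsto_divide_zero[OF Eq] by simp
    qed
    have "(\<lambda>n. artanh (pd (q n) (phi t (q n)))) \<longlonglongrightarrow> artanh 0"
      by (intro tendsto_intros pq) auto
    moreover have "(phi t ^^ n) z0 = q n" for n using sg_iter[OF sg _ z0] t by (simp add: q_def)
    ultimately have "(\<lambda>n. hyp_dist ((phi t ^^ n) z0) ((phi t ^^ Suc n) z0)) \<longlonglongrightarrow> 0"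
      by (simp add: hyp_pd)
    then show "zero_hyp_step (phi t)" unfolding zero_hyp_step_def using z0 by blast
  qed
qed


end
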